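(* Let $\mathcal P$ be a 2-reflex orthostack made of three bricks with canonical contact rectangles and signature $\sqcap_i\sqcup_j$ for some types $i,j\in\{1,2,3,4\}$. Then $\mathcal P$ is guarded by a single vertical closed face guard (indeed, by any vertical face of the middle brick).
   Context: A 2-reflex orthostack is an orthogonal polyhedron with no reflex edge parallel to the vertical ($z$) axis all of whose horizontal cross-sections are simply connected; it is a stack of bricks $B_t=R_t\times[z_{t-1},z_t]$, $t=1,\dots,k$ (bottom to top), $z_0<\dots<z_k$, each $R_t$ an axis-parallel rectangle, $R_t\ne R_{t+1}$. The contact rectangle between $B_t$ and $B_{t+1}$ is $(R_t\cap R_{t+1})\times\{z_t\}$; it is canonical if one of $R_t,R_{t+1}$ is strictly contained in the other and their set difference is connected. The type of a canonical contact rectangle is the number $i\in\{1,2,3,4\}$ of sides of the smaller rectangle not contained in the boundary of the larger one. The contact is denoted $\sqcup_i$ if $R_t\subsetneq R_{t+1}$ and $\sqcap_i$ if $R_{t+1}\subsetneq R_t$. The signature is the sequence of these symbols for $t=1,\dots,k-1$, read bottom to top. A point $x$ is visible to $y$ if segment $xy$ does not meet the exterior of the polyhedron; a closed face guard is a face including its boundary; it guards the polyhedron if every point is visible from some point of it. A face is vertical if parallel to the $z$-axis. *)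

theory Defs
  imports "HOL-Analysis.Analysis"
begin

text \<open>Points of 3-space are triples (x, y, z); the z-axis is vertical.\<close>

definition rect :: "real \<Rightarrow> real \<Rightarrow> real \<Rightarrow> real \<Rightarrow> (real \<times> real) set" where
  "rect a b c d = {a..b} \<times> {c..d}"

definition brick :: "(real \<times> real) set \<Rightarrow> real \<Rightarrow> real \<Rightarrow> (real \<times> real \<times> real) set" where
  "brick R z0 z1 = {(x, y, w). (x, y) \<in> R \<and> z0 \<le> w \<and> w \<le> z1}"

definition vertical_faces ::
  "real \<Rightarrow> real \<Rightarrow> real \<Rightarrow> real \<Rightarrow> real \<Rightarrow> real \<Rightarrow> (real \<times> real \<times> real) set set" where
  "vertical_faces a b c d z0 z1 =
     {brick ({a} \<times> {c..d}) z0 z1, brick ({b} \<times> {c..d}) z0 z1,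
      brick ({a..b} \<times> {c}) z0 z1, brick ({a..b} \<times> {d}) z0 z1}"

definition visible :: "(real \<times> real \<times> real) set \<Rightarrow> real \<times> real \<times> real \<Rightarrow> real \<times> real \<times> real \<Rightarrow> bool" where
  "visible P x y \<longleftrightarrow> closed_segment x y \<subseteq> P"

definition guards :: "(real \<times> real \<times> real) set \<Rightarrow> (real \<times> real \<times> real) set \<Rightarrow> bool" where
  "guards P G \<longleftrightarrow> (\<forall>p\<in>P. \<exists>g\<in>G. visible P g p)"

definition canonical_contact :: "(real \<times> real) set \<Rightarrow> (real \<times> real) set \<Rightarrow> bool" where
  "canonical_contact R S \<longleftrightarrow>
     (R \<subset> S \<and> connected (S - R)) \<or> (S \<subset> R \<and> connected (R - S))"

text \<open>Contact symbols: cap (upper rectangle strictly inside lower), cup (lower strictly inside upper).\<close>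
definition cap_contact :: "(real \<times> real) set \<Rightarrow> (real \<times> real) set \<Rightarrow> bool" where
  "cap_contact R S \<longleftrightarrow> S \<subset> R"

definition cup_contact :: "(real \<times> real) set \<Rightarrow> (real \<times> real) set \<Rightarrow> bool" where
  "cup_contact R S \<longleftrightarrow> R \<subset> S"

end

theory Submission
  imports Defs
begin

lemma brick_rect_eq: "brick (rect a b c d) z0 z1 = {a..b} \<times> {c..d} \<times> {z0..z1}"
  unfolding brick_def rect_def by auto

lemma brick_rect_convex: "convex (brick (rect a b c d) z0 z1)"
  unfolding brick_rect_eq by (intro convex_Times convex_real_interval)

lemma seg_in:
  assumes "convex B" "g \<in> B" "p \<in> B" "B \<subseteq> P"
  shows "visible P g p"
  using assms unfolding visible_def by (meson closed_segment_subset order_trans)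

theorem mainTheorem8:
  fixes a b c d z :: "nat \<Rightarrow> real"
    and R :: "nat \<Rightarrow> (real \<times> real) set"
    and P :: "(real \<times> real \<times> real) set"
  assumes rects: "\<forall>t\<in>{1,2,3::nat}. a t < b t \<and> c t < d t"
    and heights: "z 0 < z 1" "z 1 < z 2" "z 2 < z 3"
    and R_def: "\<forall>t. R t = rect (a t) (b t) (c t) (d t)"
    and P_def: "P = brick (R 1) (z 0) (z 1) \<union> brick (R 2) (z 1) (z 2) \<union> brick (R 3) (z 2) (z 3)"
    and canon: "canonical_contact (R 1) (R 2)" "canonical_contact (R 2) (R 3)"
    and sig: "cap_contact (R 1) (R 2)" "cup_contact (R 2) (R 3)"
  shows "\<forall>F \<in> vertical_faces (a 2) (b 2) (c 2) (d 2) (z 1) (z 2). guards P F"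
proof
  fix F assume F: "F \<in> vertical_faces (a 2) (b 2) (c 2) (d 2) (z 1) (z 2)"
  have r2: "a 2 < b 2" "c 2 < d 2" using rects by auto
  obtain x0 y0 where xy: "(x0, y0) \<in> R 2" and col: "\<forall>zz\<in>{z 1..z 2}. (x0, y0, zz) \<in> F"
  proof -
    have "\<exists>x0 y0. (x0, y0) \<in> R 2 \<and> (\<forall>zz\<in>{z 1..z 2}. (x0, y0, zz) \<in> F)"
      using F r2 unfolding vertical_faces_def
    proof (elim insertE emptyE)
      assume "F = brick ({a 2} \<times> {c 2..d 2}) (z 1) (z 2)"
      then show ?thesis using r2 by (intro exI[of _ "a 2"] exI[of _ "c 2"]) (auto simp: R_def brick_def rect_def)
    next
      assume "F = brick ({b 2} \<times> {c 2..d 2}) (z 1) (z 2)"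
      then show ?thesis using r2 by (intro exI[of _ "b 2"] exI[of _ "c 2"]) (auto simp: R_def brick_def rect_def)
    next
      assume "F = brick ({a 2..b 2} \<times> {c 2}) (z 1) (z 2)"
      then show ?thesis using r2 by (intro exI[of _ "a 2"] exI[of _ "c 2"]) (auto simp: R_def brick_def rect_def)
    next
      assume "F = brick ({a 2..b 2} \<times> {d 2}) (z 1) (z 2)"
      then show ?thesis using r2 by (intro exI[of _ "a 2"] exI[of _ "d 2"]) (auto simp: R_def brick_def rect_def)
    qed
    thus ?thesis using that by blast
  qed
  have s12: "R 2 \<subseteq> R 1" and s23: "R 2 \<subseteq> R 3" using sig unfolding cap_contact_def cup_contact_def by auto
  have cv: "\<And>t z0 z1. convex (brick (R t) z0 z1)" using R_def brick_rect_convex by simp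
  have g1: "(x0, y0, z 1) \<in> F" "(x0, y0, z 2) \<in> F" using col heights by auto
  show "guards P F"
    unfolding guards_def
  proof
    fix p assume "p \<in> P"
    then consider "p \<in> brick (R 1) (z 0) (z 1)" | "p \<in> brick (R 2) (z 1) (z 2)" | "p \<in> brick (R 3) (z 2) (z 3)"
      using P_def by blast
    then show "\<exists>g\<in>F. visible P g p"
    proof cases
      case 1
      have "(x0, y0, z 1) \<in> brick (R 1) (z 0) (z 1)" using xy s12 heights unfolding brick_def by auto
      then show ?thesis using 1 g1 cv seg_in[of "brick (R 1) (z 0) (z 1)"] P_def by blast
    next
      case 2
      have "(x0, y0, z 1) \<in> brick (R 2) (z 1) (z 2)" using xy heights unfolding brick_def by auto
      then show ?thesis using 2 g1 cv seg_in[of "brick (R 2) (z 1) (z 2)"] P_def by blast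
    next
      case 3
      have "(x0, y0, z 2) \<in> brick (R 3) (z 2) (z 3)" using xy s23 heights unfolding brick_def by auto
      then show ?thesis using 3 g1 cv seg_in[of "brick (R 3) (z 2) (z 3)"] P_def by blast
    qed
  qed
qed

end
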